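(* The function $\beta\mapsto\lambda_1(\beta)$ is non-increasing on $(0,\tfrac12)$, and for every $\beta\in(0,\tfrac12)$, $$\frac{(1-2\beta)^2}{\beta^2+(1-\beta)^2}\le\lambda_1(\beta)\le\frac{1-2\beta}{1-\beta}.$$
   Context: Tree: for an integer $m\ge2$, the regular $m$-branching tree $\mathbb{T}_m$ has as vertices the root $\emptyset$ and all finite sequences $(\emptyset,a_1,\dots,a_k)$, $k\in\mathbb{N}$, $a_i\in\{0,\dots,m-1\}$. The level of $x=(\emptyset,a_1,\dots,a_k)$ is $|x|=k$ ($|\emptyset|=0$). The successors of $x$ are $(x,i)$; for $x\ne\emptyset$, $\hat x$ denotes its immediate predecessor. Operator: for $\beta\in[0,1)$ let $p_\beta=1$ if $\beta=0$ and $p_\beta=\beta/(1-\beta)$ if $\beta\in(0,1)$. For $u:\mathbb{T}_m\to\mathbb{R}$, $\Delta_\beta u(\emptyset)=\frac1m\sum_{i=0}^{m-1}u(\emptyset,i)-u(\emptyset)$ and, for $x\ne\emptyset$, $\Delta_\beta u(x)=\big(\beta u(\hat x)+\frac{1-\beta}{m}\sum_{i=0}^{m-1}u(x,i)-u(x)\big)p_\beta^{-|x|}$. $\mathcal{A}_\beta=\{\lambda>0:\exists v:\mathbb{T}_m\to\mathbb{R}\text{ and constants }0<c<C\text{ with } c<v<C \text{ on }\mathbb{T}_m \text{ and } \Delta_\beta v+\lambda v\le0 \text{ on }\mathbb{T}_m\}$, and $\lambda_1(\beta)=\sup\mathcal{A}_\beta$. *)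

theory Defs
  imports "HOL-Analysis.Analysis" "HOL-Library.Extended_Real"
begin

text \<open>Vertices of the regular m-branching tree: the root is the empty list [],
  the vertex (root,a1,...,ak) is the list [a1,...,ak] with all ai < m.
  Successors of x are x @ [i]; the predecessor of a non-root x is butlast x;
  the level of x is length x.\<close>

definition tree :: "nat \<Rightarrow> nat list set" where
  "tree m = {xs. \<forall>a\<in>set xs. a < m}"

definition p_beta :: "real \<Rightarrow> real" where
  "p_beta \<beta> = (if \<beta> = 0 then 1 else \<beta> / (1 - \<beta>))"

definition Delta :: "nat \<Rightarrow> real \<Rightarrow> (nat list \<Rightarrow> real) \<Rightarrow> nat list \<Rightarrow> real" where
  "Delta m \<beta> u x =
     (if x = [] then (1 / real m) * (\<Sum>i<m. u [i]) - u []
      else (\<beta> * u (butlast x) + ((1 - \<beta>) / real m) * (\<Sum>i<m. u (x @ [i])) - u x)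
           / (p_beta \<beta>) ^ length x)"

definition A_beta :: "nat \<Rightarrow> real \<Rightarrow> real set" where
  "A_beta m \<beta> = {l. l > 0 \<and> (\<exists>v :: nat list \<Rightarrow> real. \<exists>c C. 0 < c \<and> c < C \<and>
      (\<forall>x\<in>tree m. c < v x \<and> v x < C) \<and>
      (\<forall>x\<in>tree m. Delta m \<beta> v x + l * v x \<le> 0))}"

text \<open>The supremum is taken in the extended reals, so no boundedness or
  nonemptiness of A_beta is presupposed.\<close>
definition lambda1 :: "nat \<Rightarrow> real \<Rightarrow> ereal" where
  "lambda1 m \<beta> = Sup (ereal ` A_beta m \<beta>)"

end

theory Submission
  imports Defs
begin

definition lev :: "nat \<Rightarrow> nat \<Rightarrow> nat list set" where
 "lev m k = {xs. set xs \<subseteq> {..<m} \<and> length xs = k}"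

lemma lev_finite[simp]: "finite (lev m k)"
  unfolding lev_def by (rule finite_lists_length_eq) simp

lemma lev_card: "card (lev m k) = m ^ k"
  unfolding lev_def using card_lists_length_eq[of "{..<m}" k] by simp

lemma lev_Suc: "lev m (Suc k) = (\<lambda>(x,i). x @ [i]) ` (lev m k \<times> {..<m})"
proof
  show "lev m (Suc k) \<subseteq> (\<lambda>(x,i). x @ [i]) ` (lev m k \<times> {..<m})"
  proof
    fix xs assume "xs \<in> lev m (Suc k)"
    then have xs: "set xs \<subseteq> {..<m}" "length xs = Suc k" by (auto simp: lev_def)
    then have ne: "xs \<noteq> []" by auto
    have eq: "xs = butlast xs @ [last xs]" using ne by simp
    have "butlast xs \<in> lev m k" using xs by (auto simp: lev_def dest: in_set_butlastD)
    moreover have "last xs \<in> {..<m}" using xs ne last_in_set by blast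
    ultimately show "xs \<in> (\<lambda>(x,i). x @ [i]) ` (lev m k \<times> {..<m})" using eq by force
  qed
  show "(\<lambda>(x,i). x @ [i]) ` (lev m k \<times> {..<m}) \<subseteq> lev m (Suc k)" by (auto simp: lev_def)
qed

lemma sum_lev_Suc: "sum u (lev m (Suc k)) = (\<Sum>x\<in>lev m k. \<Sum>i<m. u (x @ [i]))"
proof -
  have inj: "inj_on (\<lambda>(x,i). x @ [i]) (lev m k \<times> {..<m})" by (auto simp: inj_on_def)
  have "sum u (lev m (Suc k)) = (\<Sum>p\<in>lev m k \<times> {..<m}. u ((\<lambda>(x,i). x @ [i]) p))"
    unfolding lev_Suc using sum.reindex[OF inj, of u] by (simp add: comp_def)
  also have "... = (\<Sum>x\<in>lev m k. \<Sum>i<m. u (x @ [i]))"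
    by (simp add: sum.cartesian_product case_prod_beta')
  finally show ?thesis .

qed

lemma lev_0: "lev m 0 = {[]}" by (auto simp: lev_def)

lemma lev_tree: "x \<in> lev m k \<Longrightarrow> x \<in> tree m" by (auto simp: lev_def tree_def)

definition radial_ok :: "real \<Rightarrow> real \<Rightarrow> (nat \<Rightarrow> real) \<Rightarrow> bool" where
 "radial_ok \<beta> l f \<longleftrightarrow> (\<exists>c C. 0 < c \<and> c < C \<and> (\<forall>k. c < f k \<and> f k < C)) \<and> f 1 \<le> (1 - l) * f 0 \<and>
   (\<forall>n. \<beta> * f n + (1-\<beta>) * f (Suc (Suc n)) - f (Suc n) + l * (\<beta>/(1-\<beta>))^(Suc n) * f (Suc n) \<le> 0)"

lemma radial_to_A:
  assumes "0<\<beta>" "\<beta><1" "m \<ge> 1" "l > 0" "radial_ok \<beta> l f"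
  shows "l \<in> A_beta m \<beta>"
proof -
  obtain c C where cC: "0<c" "c<C" "\<forall>k. c < f k \<and> f k < C" and r1: "f 1 \<le> (1-l) * f 0"
    and rn: "\<forall>n. \<beta> * f n + (1-\<beta>) * f (Suc (Suc n)) - f (Suc n) + l * (\<beta>/(1-\<beta>))^(Suc n) * f (Suc n) \<le> 0"
    using assms(5) unfolding radial_ok_def by blast
  define v where "v = (\<lambda>x::nat list. f (length x))"
  have "\<forall>x\<in>tree m. Delta m \<beta> v x + l * v x \<le> 0"
  proof
    fix x assume "x \<in> tree m"
    show "Delta m \<beta> v x + l * v x \<le> 0"
    proof (cases x)
      case Nil
      have "Delta m \<beta> v x = f 1 - f 0" using assms(3) by (simp add: Delta_def v_def Nil)
      then show ?thesis using r1 by (simp add: v_def Nil algebra_simps)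
    next
      case (Cons a y)
      define n where "n = length y"
      have lx: "length x = Suc n" "length (butlast x) = n" using Cons n_def by auto
      have sm: "(\<Sum>i<m. v (x@[i])) = real m * f (Suc (Suc n))" using lx by (simp add: v_def)
      define q where "q = \<beta>/(1-\<beta>)"
      have qpos: "q > 0" using assms by (simp add: q_def)
      have D: "Delta m \<beta> v x = (\<beta> * f n + (1-\<beta>) * f (Suc (Suc n)) - f (Suc n)) / q^(Suc n)"
        using Cons assms(1,3) lx sm by (simp add: Delta_def p_beta_def q_def v_def)
      have h: "\<beta> * f n + (1-\<beta>) * f (Suc (Suc n)) - f (Suc n) + l * q^(Suc n) * f (Suc n) \<le> 0"
        using rn q_def by simp
      have "Delta m \<beta> v x + l * v x = (\<beta> * f n + (1-\<beta>) * f (Suc (Suc n)) - f (Suc n) + l * q^(Suc n) * f (Suc n)) / q^(Suc n)"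
        using qpos D lx by (simp add: v_def field_simps)
      also have "... \<le> 0" using h qpos by (simp add: divide_nonpos_pos)
      finally show ?thesis .
    qed
  qed
  moreover have "\<forall>x\<in>tree m. c < v x \<and> v x < C" using cC by (simp add: v_def)
  ultimately show ?thesis unfolding A_beta_def using assms(4) cC by blast
qed

lemma A_to_radial:
  assumes "0<\<beta>" "\<beta><1" "m \<ge> 1" "l \<in> A_beta m \<beta>"
  shows "l > 0 \<and> (\<exists>f. radial_ok \<beta> l f)"
proof -
  from assms(4) obtain v c C where l0: "l>0" and cC: "0<c" "c<C"
    and bnd: "\<forall>x\<in>tree m. c < v x \<and> v x < C"
    and ineq: "\<forall>x\<in>tree m. Delta m \<beta> v x + l * v x \<le> 0"
    unfolding A_beta_def by blast
  define M where "M = real m"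
  have M1: "M \<ge> 1" using assms(3) by (simp add: M_def)
  define S where "S k = sum v (lev m k)" for k
  define f where "f k = S k / M^k" for k
  have Sf: "S k = M^k * f k" for k using M1 by (simp add: f_def)
  have cardl: "real (card (lev m k)) = M^k" for k by (simp add: lev_card M_def)
  have nel: "lev m k \<noteq> {}" for k
  proof
    assume "lev m k = {}"
    then have "card (lev m k) = 0" by simp
    then show False using lev_card[of m k] assms(3) by simp
  qed
  have bounds: "c < f k \<and> f k < C" for k
  proof -
    have "(\<Sum>x\<in>lev m k. c) < S k" unfolding S_def
      by (rule sum_strict_mono) (use nel bnd lev_tree in auto)
    then have a: "M^k * c < M^k * f k" using cardl Sf by simp
    have "S k < (\<Sum>x\<in>lev m k. C)" unfolding S_def
      by (rule sum_strict_mono) (use nel bnd lev_tree in auto)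
    then have b: "M^k * f k < M^k * C" using cardl Sf by simp
    have "M^k > 0" using M1 by simp
    then show ?thesis using a b by simp
  qed
  have S1: "S 1 = (\<Sum>i<m. v [i])"
    using sum_lev_Suc[of v m 0] by (simp add: S_def lev_0)
  have S0: "S 0 = v []" by (simp add: S_def lev_0)
  have root: "f 1 \<le> (1 - l) * f 0"
  proof -
    have "[] \<in> tree m" by (simp add: tree_def)
    then have "Delta m \<beta> v [] + l * v [] \<le> 0" using ineq by blast
    then have "(1 / M) * S 1 - S 0 + l * S 0 \<le> 0" by (simp add: Delta_def S1[unfolded One_nat_def] S0 M_def)
    then show ?thesis using M1 by (simp add: f_def algebra_simps)
  qed
  define q where "q = \<beta>/(1-\<beta>)"
  have qpos: "q > 0" using assms by (simp add: q_def)
  have step: "\<beta> * f n + (1-\<beta>) * f (Suc (Suc n)) - f (Suc n) + l * q^(Suc n) * f (Suc n) \<le> 0" for n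
  proof -
    define E where "E x = \<beta> * v (butlast x) + ((1-\<beta>)/M) * (\<Sum>i<m. v (x@[i])) - v x + l * q^(Suc n) * v x" for x
    have E: "E x \<le> 0" if x: "x \<in> lev m (Suc n)" for x
    proof -
      have ne: "x \<noteq> []" and lx: "length x = Suc n" using x by (auto simp: lev_def)
      have "Delta m \<beta> v x + l * v x \<le> 0" using ineq lev_tree[OF x] by blast
      moreover have "Delta m \<beta> v x = (\<beta> * v (butlast x) + ((1-\<beta>)/M) * (\<Sum>i<m. v (x@[i])) - v x) / q^(Suc n)"
        using ne lx assms(1) by (simp add: Delta_def p_beta_def q_def M_def)
      ultimately have "(\<beta> * v (butlast x) + ((1-\<beta>)/M) * (\<Sum>i<m. v (x@[i])) - v x) / q^(Suc n) + l * v x \<le> 0" by simp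
      then have "(E x) / q^(Suc n) \<le> 0" using qpos by (simp add: E_def field_simps)
      moreover have "q^(Suc n) > 0" using qpos by simp
      ultimately show ?thesis by (smt (verit) divide_pos_pos)
    qed
    have "(\<Sum>x\<in>lev m (Suc n). E x) \<le> 0" by (rule sum_nonpos) (use E in auto)
    moreover have "(\<Sum>x\<in>lev m (Suc n). E x) = \<beta> * (\<Sum>x\<in>lev m (Suc n). v (butlast x))
        + ((1-\<beta>)/M) * (\<Sum>x\<in>lev m (Suc n). \<Sum>i<m. v (x@[i])) - S (Suc n) + l * q^(Suc n) * S (Suc n)"
      by (simp add: E_def S_def sum.distrib sum_subtractf sum_distrib_left)
    moreover have "(\<Sum>x\<in>lev m (Suc n). v (butlast x)) = M * S n"
      by (simp add: sum_lev_Suc[of "\<lambda>x. v (butlast x)"] S_def M_def sum_distrib_left)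
    moreover have "(\<Sum>x\<in>lev m (Suc n). \<Sum>i<m. v (x@[i])) = S (Suc (Suc n))"
      by (simp add: S_def sum_lev_Suc[of v m "Suc n"])
    ultimately have "\<beta> * (M * S n) + ((1-\<beta>)/M) * S (Suc (Suc n)) - S (Suc n) + l * q^(Suc n) * S (Suc n) \<le> 0"
      by simp
    moreover have "\<beta> * (M * S n) + ((1-\<beta>)/M) * S (Suc (Suc n)) - S (Suc n) + l * q^(Suc n) * S (Suc n)
       = M^(Suc n) * (\<beta> * f n + (1-\<beta>) * f (Suc (Suc n)) - f (Suc n) + l * q^(Suc n) * f (Suc n))"
      using M1 by (simp add: Sf field_simps)
    ultimately have "M^(Suc n) * (\<beta> * f n + (1-\<beta>) * f (Suc (Suc n)) - f (Suc n) + l * q^(Suc n) * f (Suc n)) \<le> 0"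
      by simp
    moreover have "M^(Suc n) > 0" using M1 by simp
    ultimately show ?thesis by (smt (verit) mult_pos_pos)
  qed
  have "radial_ok \<beta> l f" unfolding radial_ok_def
    using cC bounds root step by (auto simp: q_def)
  then show ?thesis using l0 by blast
qed

lemma radial_dec:
  assumes "0<\<beta>" "\<beta><1" "l>0" "radial_ok \<beta> l f"
  shows "f (Suc n) - f n \<le> - l * (\<beta>/(1-\<beta>))^n * f 0"
proof -
  define q where "q = \<beta>/(1-\<beta>)"
  obtain c C where cC: "0<c" "c<C" "\<forall>k. c < f k \<and> f k < C" and r1: "f 1 \<le> (1-l) * f 0"
    and rn: "\<forall>n. \<beta> * f n + (1-\<beta>) * f (Suc (Suc n)) - f (Suc n) + l * q^(Suc n) * f (Suc n) \<le> 0"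
    using assms(4) unfolding radial_ok_def q_def by blast
  have qb: "\<beta> = q * (1-\<beta>)" using assms by (simp add: q_def)
  show ?thesis unfolding q_def[symmetric]
  proof (induction n)
    case 0
    then show ?case using r1 by (simp add: algebra_simps)
  next
    case (Suc n)
    have fp: "f (Suc n) > 0" using cC(1) cC(3) by (meson less_trans)
    have "l * q^(Suc n) * f (Suc n) \<ge> 0" using assms(3) fp qb assms by (simp add: q_def)
    then have "(1-\<beta>) * (f (Suc (Suc n)) - f (Suc n)) \<le> \<beta> * (f (Suc n) - f n)"
      using rn[rule_format, of n] by (simp add: algebra_simps)
    also have "... \<le> \<beta> * (- l * q^n * f 0)" by (rule mult_left_mono[OF Suc.IH]) (use assms(1) in simp)
    also have "... = (1-\<beta>) * (- l * q^(Suc n) * f 0)" by (subst qb) (simp add: algebra_simps)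
    finally have X: "(1-\<beta>) * (f (Suc (Suc n)) - f (Suc n)) \<le> (1-\<beta>) * (- l * q^(Suc n) * f 0)" .
    show ?case using mult_left_le_imp_le[OF X] assms(2) by simp
  qed
qed

lemma radial_upper:
  assumes "0<\<beta>" "\<beta><1/2" "l>0" "radial_ok \<beta> l f"
  shows "l \<le> 1 - \<beta>/(1-\<beta>)"
proof -
  define q where "q = \<beta>/(1-\<beta>)"
  have q0: "q > 0" and q1: "q < 1" using assms by (auto simp: q_def field_simps)
  obtain c C where cC: "0<c" "c<C" "\<forall>k. c < f k \<and> f k < C"
    using assms(4) unfolding radial_ok_def by blast
  have f0: "f 0 > 0" using cC by (meson less_trans)
  have dec: "f (Suc n) - f n \<le> - l * q^n * f 0" for n
    using radial_dec[OF assms(1) _ assms(3,4)] assms(2) by (simp add: q_def)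
  have fn: "f n \<le> f 0 - l * f 0 * (\<Sum>j<n. q^j)" for n
  proof (induction n)
    case 0 then show ?case by simp
  next
    case (Suc n) then show ?case using dec[of n] by (simp add: algebra_simps)
  qed
  have lt: "l * (1 - q^n) < 1 - q" for n
  proof -
    have "f n > 0" using cC by (meson less_trans)
    then have "l * f 0 * (\<Sum>j<n. q^j) < f 0" using fn[of n] by simp
    then have "l * (\<Sum>j<n. q^j) < 1" using f0 by (simp add: mult.commute mult.left_commute)
    moreover have "(\<Sum>j<n. q^j) = (1 - q^n) / (1 - q)" using q1 by (simp add: sum_gp_strict)
    ultimately have "l * ((1 - q^n) / (1 - q)) < 1" by simp
    then show ?thesis using q1 by (simp add: field_simps)
  qed
  show ?thesis
  proof (rule ccontr)
    assume "\<not> l \<le> 1 - \<beta>/(1-\<beta>)"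
    then have gt: "l > 1 - q" by (simp add: q_def)
    have "0 < 1 - (1-q)/l" using gt assms(3) by (simp add: field_simps)
    then obtain n where n: "q^n < 1 - (1-q)/l" using real_arch_pow_inv[OF _ q1] by blast
    then have "l * q^n < l - (1 - q)" using assms(3) by (simp add: field_simps)
    then have "l * (1 - q^n) > 1 - q" by (simp add: algebra_simps)
    then show False using lt[of n] by simp
  qed
qed

lemma radial_mono:
  assumes "0<\<beta>1" "\<beta>1\<le>\<beta>2" "\<beta>2<1" "l>0" "radial_ok \<beta>2 l f"
  shows "radial_ok \<beta>1 l f"
proof -
  obtain c C where cC: "0<c" "c<C" "\<forall>k. c < f k \<and> f k < C" and r1: "f 1 \<le> (1-l) * f 0"
    and rn: "\<forall>n. \<beta>2 * f n + (1-\<beta>2) * f (Suc (Suc n)) - f (Suc n) + l * (\<beta>2/(1-\<beta>2))^(Suc n) * f (Suc n) \<le> 0"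
    using assms(5) unfolding radial_ok_def by blast
  define q1 where "q1 = \<beta>1/(1-\<beta>1)"
  define q2 where "q2 = \<beta>2/(1-\<beta>2)"
  have b1: "\<beta>1 < 1" using assms by simp
  have q1pos: "q1 > 0" using assms b1 by (simp add: q1_def)
  have q12: "q1 \<le> q2" unfolding q1_def q2_def using assms b1
    by (simp add: frac_le divide_le_cancel field_simps)
  have w12: "1/(1-\<beta>1) \<le> 1/(1-\<beta>2)" using assms b1 by (simp add: frac_le)
  have new: "\<beta>1 * f n + (1-\<beta>1) * f (Suc (Suc n)) - f (Suc n) + l * q1^(Suc n) * f (Suc n) \<le> 0" for n
  proof -
    define a0 where "a0 = f n - f (Suc n)"
    define a1 where "a1 = f (Suc n) - f (Suc (Suc n))"
    define F where "F = f (Suc n)"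
    have f0: "f 0 > 0" using cC by (meson less_trans)
    have "l * (\<beta>2/(1-\<beta>2))^n * f 0 \<ge> 0" using assms f0 by simp
    then have a0: "a0 \<ge> 0" using radial_dec[OF _ assms(3,4,5), of n] assms
      by (simp add: a0_def)
    have Fp: "F > 0" using cC by (simp add: F_def) (meson less_trans)
    have "\<beta>2 * a0 - (1-\<beta>2) * a1 + l * q2^(Suc n) * F \<le> 0"
      using rn[rule_format, of n] by (simp add: a0_def a1_def F_def q2_def algebra_simps)
    have q2b: "(1-\<beta>2)*q2 = \<beta>2" and w2: "(1-\<beta>2)*(1/(1-\<beta>2)) = 1" using assms by (auto simp: q2_def)
    have "(1-\<beta>2) * (q2*a0 + l*q2^(Suc n)*F*(1/(1-\<beta>2)) - a1) = (1-\<beta>2)*q2*a0 + l*q2^(Suc n)*F*((1-\<beta>2)*(1/(1-\<beta>2))) - (1-\<beta>2)*a1"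
      by (simp only: algebra_simps)
    also have "... = \<beta>2 * a0 - (1-\<beta>2) * a1 + l * q2^(Suc n) * F" by (simp only: q2b w2 mult_1_right)
    finally have "(1-\<beta>2) * (q2*a0 + l*q2^(Suc n)*F*(1/(1-\<beta>2)) - a1) \<le> 0"
      using \<open>\<beta>2 * a0 - (1-\<beta>2) * a1 + l * q2^(Suc n) * F \<le> 0\<close> by simp
    then have h2: "q2 * a0 + l * q2^(Suc n) * F * (1/(1-\<beta>2)) \<le> a1" using assms
      by (simp add: mult_le_0_iff)
    have "q1 * a0 \<le> q2 * a0" using q12 a0 by (simp add: mult_right_mono)
    moreover have "l * q1^(Suc n) * F * (1/(1-\<beta>1)) \<le> l * q2^(Suc n) * F * (1/(1-\<beta>2))"
    proof -
      have "q1^(Suc n) \<le> q2^(Suc n)" by (rule power_mono) (use q12 q1pos in auto)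
      then have "q1^(Suc n) * (1/(1-\<beta>1)) \<le> q2^(Suc n) * (1/(1-\<beta>2))"
        using w12 q1pos b1 q12 by (intro mult_mono) auto
      then show ?thesis using Fp assms(4)
        by (metis (no_types, lifting) mult.assoc mult.commute mult_le_cancel_left_pos mult_pos_pos)
    qed
    ultimately have h1: "q1 * a0 + l * q1^(Suc n) * F * (1/(1-\<beta>1)) \<le> a1" using h2 by simp
    have q1b: "(1-\<beta>1)*q1 = \<beta>1" and w1: "(1-\<beta>1)*(1/(1-\<beta>1)) = 1" using b1 by (auto simp: q1_def)
    have "(1-\<beta>1) * (q1*a0 + l*q1^(Suc n)*F*(1/(1-\<beta>1)) - a1) = (1-\<beta>1)*q1*a0 + l*q1^(Suc n)*F*((1-\<beta>1)*(1/(1-\<beta>1))) - (1-\<beta>1)*a1"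
      by (simp only: algebra_simps)
    also have "... = \<beta>1 * a0 - (1-\<beta>1) * a1 + l * q1^(Suc n) * F" by (simp only: q1b w1 mult_1_right)
    finally have "\<beta>1 * a0 - (1-\<beta>1) * a1 + l * q1^(Suc n) * F = (1-\<beta>1) * (q1*a0 + l*q1^(Suc n)*F*(1/(1-\<beta>1)) - a1)" by simp
    moreover have "(1-\<beta>1) * (q1*a0 + l*q1^(Suc n)*F*(1/(1-\<beta>1)) - a1) \<le> 0"
      using h1 b1 by (simp add: mult_le_0_iff)
    ultimately have "\<beta>1 * a0 - (1-\<beta>1) * a1 + l * q1^(Suc n) * F \<le> 0" by simp
    then show ?thesis by (simp add: a0_def a1_def F_def algebra_simps)
  qed
  show ?thesis unfolding radial_ok_def using cC r1 new by (auto simp: q1_def)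
qed

lemma construct:
  fixes \<beta> q r T D G :: real
  assumes b0: "0<\<beta>" and b1: "\<beta><1" and q0: "0<q" and q1: "q<1" and qb: "\<beta> = q*(1-\<beta>)"
    and rq: "(1+r)*q = 1-T" and rs: "r*(1-2*\<beta>) = T" and q2r: "q*(2*r+1) \<le> r+1"
    and T0: "0<T" and T1: "T<1" and r0: "r>0" and Gd: "G = T/(1-T)" and Dd: "D*T = 1 + (1-\<beta>)/(1-T)"
  shows "radial_ok \<beta> T (\<lambda>k. 1 + D*((r*real k+1)*q^k) + (if k=0 then G else 0))"
proof -
  define h where "h k = (r*real k+1)*q^k" for k
  define f where "f k = 1 + D*((r*real k+1)*q^k) + (if k=0 then G else 0)" for k
  have qeq: "\<beta>/(1-\<beta>) = q" using qb b1 by (simp add: field_simps)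
  have hstep: "h (Suc k) \<le> h k" if k: "k \<ge> 1" for k
  proof -
    have e: "q*(r*real k+r+1) - (r*real k+1) = (q-1)*r*(real k-1) + (q*(2*r+1) - (r+1))"
      by (simp add: algebra_simps)
    have "(q-1)*r*(real k-1) \<le> 0" using q1 r0 k
      by (simp add: mult_nonpos_nonneg mult_le_0_iff)
    then have "q*(r*real k+r+1) \<le> r*real k+1" using e q2r by linarith
    then have "q*(r*real k+r+1) * q^k \<le> (r*real k+1) * q^k" using q0 by (simp add: mult_right_mono)
    then show ?thesis by (simp add: h_def algebra_simps)
  qed
  have h1: "h 1 = 1 - T" using rq by (simp add: h_def algebra_simps)
  have hle: "h k \<le> 1 - T" if "k \<ge> 1" for k
    using that
  proof (induction k rule: dec_induct)
    case base then show ?case using h1 by simp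
  next
    case (step k) then show ?case using hstep[of k] by simp
  qed
  have hnn: "h k \<ge> 0" for k using q0 r0 by (simp add: h_def)
  have hle1: "h k \<le> 1" for k
  proof (cases "k = 0")
    case True then show ?thesis by (simp add: h_def)
  next
    case False then show ?thesis using hle[of k] T0 by simp
  qed
  have DT: "D*T \<ge> 1" using Dd b1 T1 by simp
  have D0: "D > 0" using DT T0 by (smt (verit) mult_nonpos_nonneg)
  have G0: "G > 0" using Gd T0 T1 by simp
  have fh: "f k = 1 + D * h k + (if k=0 then G else 0)" for k by (simp add: f_def h_def)
  have bounds: "1/2 < f k \<and> f k < 2 + D + G" for k
  proof -
    have "D * h k \<ge> 0" using D0 hnn by simp
    moreover have "D * h k \<le> D" using D0 hle1[of k] by (simp add: mult_left_le)
    moreover have "(if k=0 then G else 0) \<ge> 0" "(if k=0 then G else 0) \<le> G" using G0 by auto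
    ultimately show ?thesis unfolding fh by linarith
  qed
  have root: "f 1 \<le> (1 - T) * f 0"
  proof -
    have "(1-T)*G = T" using Gd T1 by simp
    then have "(1 - T) * f 0 = 1 + D*(1-T)" by (simp add: fh h_def algebra_simps)
    then show ?thesis using h1 by (simp add: fh)
  qed
  have core: "\<beta>*h n + (1-\<beta>)*h (Suc (Suc n)) - h (Suc n) = -T*q^(Suc n)" for n
  proof -
    have c1: "(1-\<beta>)*q*q = \<beta>*q" by (metis qb mult.assoc mult.commute)
    have "\<beta>*(r*real n+1) + (1-\<beta>)*q*q*(r*real n+2*r+1) - q*(r*real n+r+1)
        = \<beta>*(r*real n+1) + \<beta>*q*(r*real n+2*r+1) - q*(r*real n+r+1)" using c1 by simp
    also have "... = q*(1-\<beta>)*(r*real n+1) + \<beta>*q*(r*real n+2*r+1) - q*(r*real n+r+1)"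
      by (subst qb) simp
    also have "... = -(r*(1-2*\<beta>))*q" by (simp add: algebra_simps)
    also have "... = -T*q" using rs by simp
    finally have "\<beta>*(r*real n+1) + (1-\<beta>)*q*q*(r*real n+2*r+1) - q*(r*real n+r+1) = -T*q" .
    then have "q^n * (\<beta>*(r*real n+1) + (1-\<beta>)*q*q*(r*real n+2*r+1) - q*(r*real n+r+1)) = q^n*(-T*q)"
      by simp
    then show ?thesis by (simp add: h_def algebra_simps)
  qed
  have step: "\<beta> * f n + (1-\<beta>) * f (Suc (Suc n)) - f (Suc n) + T * (\<beta>/(1-\<beta>))^(Suc n) * f (Suc n) \<le> 0" for n
  proof -
    have e: "\<beta> * f n + (1-\<beta>) * f (Suc (Suc n)) - f (Suc n) + T * q^(Suc n) * f (Suc n)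
       = \<beta> * (if n=0 then G else 0) + T * q^(Suc n) * (1 - D + D * h (Suc n))"
    proof -
      have "\<beta> * f n + (1-\<beta>) * f (Suc (Suc n)) - f (Suc n) + T * q^(Suc n) * f (Suc n)
         = \<beta> * (if n=0 then G else 0) + D * (\<beta>*h n + (1-\<beta>)*h (Suc (Suc n)) - h (Suc n)) + T * q^(Suc n) * (1 + D * h (Suc n))"
        by (simp add: fh algebra_simps)
      also have "... = \<beta> * (if n=0 then G else 0) + T * q^(Suc n) * (1 - D + D * h (Suc n))"
        by (simp only: core) (simp add: algebra_simps)
      finally show ?thesis .
    qed
    have tq: "T * q^(Suc n) > 0" using T0 q0 by simp
    show ?thesis
    proof (cases "n = 0")
      case True
      have dd: "1 - D*T = -((1-\<beta>)/(1-T))" using Dd by simp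
      have "T*q*(1 - D*T) = - T * q * ((1-\<beta>)/(1-T))" using dd by simp
      also have "... = - (T*(q*(1-\<beta>))/(1-T))" by simp
      also have "... = - (T*\<beta>/(1-T))" by (simp only: qb[symmetric])
      also have "... = - \<beta> * G" using Gd by simp
      finally have "T*q*(1 - D*T) = - \<beta> * G" .
      then have "\<beta> * G + T * q * (1 - D + D * (1-T)) = 0" by (simp add: algebra_simps)
      then show ?thesis using e True h1 qeq by simp
    next
      case False
      have "D * h (Suc n) \<le> D * (1-T)" using hle[of "Suc n"] D0 by (simp add: mult_left_mono)
      then have "1 - D + D * h (Suc n) \<le> 0" using DT by (simp add: algebra_simps)
      then have "T * q^(Suc n) * (1 - D + D * h (Suc n)) \<le> 0" using tq by (simp add: mult_nonneg_nonpos)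
      then show ?thesis using e False qeq by simp
    qed
  qed
  have "radial_ok \<beta> T f" unfolding radial_ok_def
  proof (intro conjI)
    show "\<exists>c C. 0 < c \<and> c < C \<and> (\<forall>k. c < f k \<and> f k < C)"
    proof -
      have "0 < (1/2::real) \<and> 1/2 < 2+D+G \<and> (\<forall>k. 1/2 < f k \<and> f k < 2+D+G)" using bounds D0 G0 by auto
      then show ?thesis by blast
    qed
    show "f 1 \<le> (1 - T) * f 0" by (rule root)
    show "\<forall>n. \<beta> * f n + (1 - \<beta>) * f (Suc (Suc n)) - f (Suc n) + T * (\<beta> / (1 - \<beta>)) ^ Suc n * f (Suc n) \<le> 0"
      using step by blast
  qed
  moreover have "f = (\<lambda>k. 1 + D*((r*real k+1)*q^k) + (if k=0 then G else 0))" by (rule ext) (simp add: f_def)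
  ultimately show ?thesis by simp
qed

lemma lower_in_A:
  assumes b0: "0<\<beta>" and b1: "\<beta><1/2" and m: "m \<ge> 1"
  shows "(1 - 2*\<beta>)^2 / (\<beta>^2 + (1 - \<beta>)^2) \<in> A_beta m \<beta>"
proof -
  define wv where "wv = 1 - 2*\<beta>"
  define N where "N = \<beta>^2 + (1-\<beta>)^2"
  define T where "T = wv^2/N"
  define r where "r = wv/N"
  define q where "q = \<beta>/(1-\<beta>)"
  define G where "G = T/(1-T)"
  define D where "D = (1 + (1-\<beta>)/(1-T))/T"
  have s0: "wv > 0" using b1 by (simp add: wv_def)
  have N0: "N > 0" using b0 by (simp add: N_def add_pos_nonneg)
  have q0: "q > 0" and q1: "q < 1" using b0 b1 by (auto simp: q_def field_simps)
  have qb: "\<beta> = q*(1-\<beta>)" using b1 by (simp add: q_def)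
  have T0: "T > 0" using s0 N0 by (simp add: T_def)
  have NmS: "N - wv^2 = 2*\<beta>*(1-\<beta>)" by (simp add: N_def wv_def power2_eq_square algebra_simps)
  have T1: "T < 1"
  proof -
    have "2*\<beta>*(1-\<beta>) > 0" using b0 b1 by simp
    then have "wv^2 < N" using NmS by linarith
    then show ?thesis using N0 by (simp add: T_def)
  qed
  have r0: "r > 0" using s0 N0 by (simp add: r_def)
  have rs: "r*(1-2*\<beta>) = T" by (simp add: r_def T_def wv_def power2_eq_square)
  have NpS: "N + wv = 2*(1-\<beta>)^2" by (simp add: N_def wv_def power2_eq_square algebra_simps)
  have rq: "(1+r)*q = 1-T"
  proof -
    have "(1+r)*q = (N+wv)/N * (\<beta>/(1-\<beta>))" using N0 by (simp add: r_def q_def add_divide_distrib)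
    also have "... = 2*(1-\<beta>)^2/N * (\<beta>/(1-\<beta>))" using NpS by simp
    also have "... = 2*\<beta>*(1-\<beta>)/N" using b1 by (simp add: power2_eq_square)
    also have "... = (N - wv^2)/N" using NmS by simp
    also have "... = 1 - T" using N0 by (simp add: T_def diff_divide_distrib)
    finally show ?thesis .
  qed
  have q2r: "q*(2*r+1) \<le> r+1"
  proof -
    have key: "(1-\<beta>)*(wv+N) - \<beta>*(2*wv+N) = wv^2*(2-\<beta>)"
      by (simp add: N_def wv_def power2_eq_square algebra_simps)
    have "wv^2*(2-\<beta>) \<ge> 0" using b1 by simp
    then have "\<beta>*(2*wv+N) \<le> (1-\<beta>)*(wv+N)" using key by linarith
    then have "\<beta>*(2*wv+N) / ((1-\<beta>)*N) \<le> (1-\<beta>)*(wv+N) / ((1-\<beta>)*N)"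
      using N0 b1 by (intro divide_right_mono) auto
    moreover have "q*(2*r+1) = \<beta>*(2*wv+N) / ((1-\<beta>)*N)" using N0 b1 by (simp add: q_def r_def field_simps)
    moreover have "r+1 = (1-\<beta>)*(wv+N) / ((1-\<beta>)*N)" using N0 b1 by (simp add: r_def field_simps)
    ultimately show ?thesis by simp
  qed
  have Gd: "G = T/(1-T)" by (simp add: G_def)
  have Dd: "D*T = 1 + (1-\<beta>)/(1-T)" using T0 by (simp add: D_def)
  have "radial_ok \<beta> T (\<lambda>k. 1 + D*((r*real k+1)*q^k) + (if k=0 then G else 0))"
    by (rule construct[OF b0 _ q0 q1 qb rq rs q2r T0 T1 r0 Gd Dd]) (use b1 in simp)
  then have "T \<in> A_beta m \<beta>" by (intro radial_to_A[OF b0 _ m T0]) (use b1 in simp_all)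
  then show ?thesis by (simp add: T_def wv_def N_def)
qed

theorem proposition1p3:
  fixes m :: nat
  assumes "m \<ge> 2"
  shows "(\<forall>\<beta>1 \<beta>2. 0 < \<beta>1 \<and> \<beta>1 \<le> \<beta>2 \<and> \<beta>2 < 1/2 \<longrightarrow> lambda1 m \<beta>2 \<le> lambda1 m \<beta>1) \<and>
         (\<forall>\<beta>::real. 0 < \<beta> \<and> \<beta> < 1/2 \<longrightarrow>
            ereal ((1 - 2*\<beta>)^2 / (\<beta>^2 + (1 - \<beta>)^2)) \<le> lambda1 m \<beta> \<and>
            lambda1 m \<beta> \<le> ereal ((1 - 2*\<beta>) / (1 - \<beta>)))"
proof (intro conjI allI impI)
  have m1: "m \<ge> 1" using assms by simp
  fix \<beta>1 \<beta>2 :: real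
  assume h: "0 < \<beta>1 \<and> \<beta>1 \<le> \<beta>2 \<and> \<beta>2 < 1/2"
  have "A_beta m \<beta>2 \<subseteq> A_beta m \<beta>1"
  proof
    fix l assume l: "l \<in> A_beta m \<beta>2"
    from A_to_radial[OF _ _ m1 l] h obtain f where l0: "l > 0" and f: "radial_ok \<beta>2 l f" by auto
    have "radial_ok \<beta>1 l f" by (rule radial_mono[OF _ _ _ l0 f]) (use h in auto)
    then show "l \<in> A_beta m \<beta>1" by (intro radial_to_A[OF _ _ m1 l0]) (use h in auto)
  qed
  then show "lambda1 m \<beta>2 \<le> lambda1 m \<beta>1" unfolding lambda1_def
    by (intro Sup_subset_mono image_mono)
next
  have m1: "m \<ge> 1" using assms by simp
  fix \<beta> :: real
  assume h: "0 < \<beta> \<and> \<beta> < 1/2"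
  show "ereal ((1 - 2*\<beta>)^2 / (\<beta>^2 + (1 - \<beta>)^2)) \<le> lambda1 m \<beta>"
    unfolding lambda1_def using lower_in_A[OF _ _ m1, of \<beta>] h by (intro Sup_upper) auto
next
  have m1: "m \<ge> 1" using assms by simp
  fix \<beta> :: real
  assume h: "0 < \<beta> \<and> \<beta> < 1/2"
  show "lambda1 m \<beta> \<le> ereal ((1 - 2*\<beta>) / (1 - \<beta>))"
    unfolding lambda1_def
  proof (rule Sup_least)
    fix y assume "y \<in> ereal ` A_beta m \<beta>"
    then obtain l where y: "y = ereal l" and l: "l \<in> A_beta m \<beta>" by auto
    from A_to_radial[OF _ _ m1 l] h obtain f where l0: "l > 0" and f: "radial_ok \<beta> l f" by auto
    have "l \<le> 1 - \<beta>/(1-\<beta>)" using radial_upper[OF _ _ l0 f] h by auto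
    also have "... = (1 - 2*\<beta>) / (1 - \<beta>)" using h by (simp add: field_simps)
    finally show "y \<le> ereal ((1 - 2*\<beta>) / (1 - \<beta>))" using y by simp
  qed
qed

end
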